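(* Let $L$ be any infinite context-free language over an alphabet $\Sigma$ with $|\Sigma|\geq 2$. Then there is a positive integer $m$ satisfying the following. Let $n\geq 2$ be an integer, let $S\subseteq L\cap\Sigma^n$, and let $j_0,k\in\{2,\ldots,n\}$ be indices such that $k\geq 2j_0$ and $|S_{i,u}|<|S|/\big(m(k-j_0+1)(n-j_0+1)\big)$ for every index $i\in\{1,\ldots,n-j_0\}$ and every string $u\in\Sigma^{j_0}$. Then there exist indices $i\in\{1,\ldots,n\}$ and $j\in\{j_0,\ldots,k\}$ with $i+j\leq n$, and two strings $x=x_1x_2x_3$ and $y=y_1y_2y_3$ in $S$ with $|x_1|=|y_1|=i$, $|x_2|=|y_2|=j$ and $|x_3|=|y_3|$, such that (i) $x_2\neq y_2$, (ii) $x_1y_2x_3\in L$, and (iii) $y_1x_2y_3\in L$.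
   Context: $\Sigma^n$ denotes the set of strings of length exactly $n$ over $\Sigma$. For a string $x$ of length $n$ and indices $0\leq i\leq j\leq n$, $\mathrm{midd}_{i,j}(x)$ is the string obtained from $x$ by deleting its first $i$ symbols and its last $n-j$ symbols (so it has length $j-i$). For a fixed $S\subseteq\Sigma^n$, an index $i$ and a string $u\in\Sigma^{j}$ with $i+j\leq n$, $S_{i,u}=\{x\in S\mid u=\mathrm{midd}_{i,i+j}(x)\}$. *)

theory Defs
  imports Complex_Main
begin

datatype ('n, 'a) sym = NT 'n | Tm 'a

definition derive1 :: "('n \<times> ('n, 'a) sym list) set \<Rightarrow> ('n, 'a) sym list \<Rightarrow> ('n, 'a) sym list \<Rightarrow> bool" where
  "derive1 P u v \<longleftrightarrow> (\<exists>l A r w. (A, w) \<in> P \<and> u = l @ [NT A] @ r \<and> v = l @ w @ r)"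

definition derives :: "('n \<times> ('n, 'a) sym list) set \<Rightarrow> ('n, 'a) sym list \<Rightarrow> ('n, 'a) sym list \<Rightarrow> bool" where
  "derives P = (derive1 P)\<^sup>*\<^sup>*"

definition Lang :: "('n \<times> ('n, 'a) sym list) set \<Rightarrow> 'n \<Rightarrow> 'a list set" where
  "Lang P S = {w. derives P [NT S] (map Tm w)}"

text \<open>A language is context-free if it is generated by a finite grammar
  (nonterminals w.l.o.g. natural numbers).\<close>
definition context_free :: "'a list set \<Rightarrow> bool" where
  "context_free L \<longleftrightarrow> (\<exists>(P :: (nat \<times> (nat, 'a) sym list) set) S. finite P \<and> L = Lang P S)"

text \<open>midd i j x: delete first i symbols and last (length x - j) symbols.\<close>
definition midd :: "nat \<Rightarrow> nat \<Rightarrow> 'a list \<Rightarrow> 'a list" where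
  "midd i j x = take (j - i) (drop i x)"

definition Sslice :: "'a list set \<Rightarrow> nat \<Rightarrow> 'a list \<Rightarrow> 'a list set" where
  "Sslice S i u = {x \<in> S. u = midd i (i + length u) x}"

end

theory Submission
  imports Defs
begin

lemma derive1_app_l: "derive1 P u v \<Longrightarrow> derive1 P (w@u) (w@v)"
  unfolding derive1_def by (metis append.assoc)

lemma derive1_app_r: "derive1 P u v \<Longrightarrow> derive1 P (u@w) (v@w)"
  unfolding derive1_def by (metis append.assoc)

lemma derives_app_l: "derives P u v \<Longrightarrow> derives P (w@u) (w@v)"
  unfolding derives_def
  by (induction rule: rtranclp_induct) (auto intro: rtranclp.rtrancl_into_rtrancl derive1_app_l)

lemma derives_app_r: "derives P u v \<Longrightarrow> derives P (u@w) (v@w)"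
  unfolding derives_def
  by (induction rule: rtranclp_induct) (auto intro: rtranclp.rtrancl_into_rtrancl derive1_app_r)

lemma derives_append: "derives P a b \<Longrightarrow> derives P c d \<Longrightarrow> derives P (a@c) (b@d)"
  using derives_app_l derives_app_r unfolding derives_def
  by (metis (no_types, lifting) rtranclp_trans)

lemma derives_trans: "derives P a b \<Longrightarrow> derives P b c \<Longrightarrow> derives P a c"
  unfolding derives_def by (rule rtranclp_trans)

lemma derives_refl: "derives P a a"
  unfolding derives_def by simp

lemma derive1_split:
  assumes "derive1 P (u@v) x"
  shows "(\<exists>u'. derive1 P u u' \<and> x = u'@v) \<or> (\<exists>v'. derive1 P v v' \<and> x = u@v')"
proof -
  obtain l A r w where h: "(A,w) \<in> P" "u@v = l @ [NT A] @ r" "x = l @ w @ r"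
    using assms unfolding derive1_def by blast
  from h(2) obtain us where "u = l @ us \<and> us @ v = [NT A] @ r \<or> u @ us = l \<and> v = us @ [NT A] @ r"
    by (auto simp: append_eq_append_conv2)
  then show ?thesis
  proof
    assume a: "u = l @ us \<and> us @ v = [NT A] @ r"
    show ?thesis
    proof (cases us)
      case Nil
      then have "derive1 P v (w@r)" "x = u @ (w@r)" using a h unfolding derive1_def by force+
      then show ?thesis by blast
    next
      case (Cons s us')
      then have "u = l @ [NT A] @ us'" "r = us' @ v" using a by auto
      then have "derive1 P u (l @ w @ us')" "x = (l @ w @ us') @ v" using h unfolding derive1_def by force+
      then show ?thesis by blast
    qed
  next
    assume a: "u @ us = l \<and> v = us @ [NT A] @ r"
    then have "derive1 P v (us @ w @ r)" "x = u @ (us @ w @ r)" using h unfolding derive1_def by force+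
    then show ?thesis by blast
  qed
qed

lemma relpow_split:
  "(derive1 P ^^ N) (u@v) w \<Longrightarrow> \<exists>N1 N2 w1 w2. w = w1@w2 \<and> N1 + N2 = N \<and>
     (derive1 P ^^ N1) u w1 \<and> (derive1 P ^^ N2) v w2"
proof (induction N arbitrary: u v)
  case 0
  then show ?case by (auto intro!: exI[of _ 0] exI[of _ u] exI[of _ v])
next
  case (Suc N)
  then obtain x where x: "derive1 P (u@v) x" "(derive1 P ^^ N) x w"
    using relpowp_Suc_D2 by metis
  from derive1_split[OF x(1)] show ?case
  proof
    assume "\<exists>u'. derive1 P u u' \<and> x = u'@v"
    then obtain u' where u': "derive1 P u u'" "x = u'@v" by blast
    from Suc.IH[of u' v] x(2) u' obtain N1 N2 w1 w2 where
      "w = w1@w2" "N1 + N2 = N" "(derive1 P ^^ N1) u' w1" "(derive1 P ^^ N2) v w2" by blast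
    then show ?thesis using u'(1) relpowp_Suc_I2
      by (metis add_Suc)
  next
    assume "\<exists>v'. derive1 P v v' \<and> x = u@v'"
    then obtain v' where v': "derive1 P v v'" "x = u@v'" by blast
    from Suc.IH[of u v'] x(2) v' obtain N1 N2 w1 w2 where
      "w = w1@w2" "N1 + N2 = N" "(derive1 P ^^ N1) u w1" "(derive1 P ^^ N2) v' w2" by blast
    then show ?thesis using v'(1) relpowp_Suc_I2
      by (metis add_Suc_right)
  qed
qed

lemma no_derive1_tm: fixes P :: "('n \<times> ('n,'a) sym list) set" shows "\<not> derive1 P (map Tm w) x"
proof
  assume "derive1 P (map Tm w) x"
  then obtain l r and A :: 'n where "map Tm w = l @ [NT A] @ r" unfolding derive1_def by force
  then have "NT A \<in> set (map Tm w)" by (metis in_set_conv_decomp append_Cons append_Nil)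
  then show False by auto
qed

lemma relpow_tm: "(derive1 P ^^ N) (map Tm w) x \<Longrightarrow> x = map Tm w"
proof (cases N)
  case (Suc M)
  assume "(derive1 P ^^ N) (map Tm w) x"
  then show ?thesis using Suc relpowp_Suc_D2 no_derive1_tm by metis
qed auto

lemma derive1_NT: "derive1 P [NT A] x \<Longrightarrow> (A, x) \<in> P"
  unfolding derive1_def by (auto simp: Cons_eq_append_conv)

definition Sub :: "('n \<times> ('n,'a) sym list) set \<Rightarrow> 'n \<Rightarrow> ('n,'a) sym list set" where
  "Sub P S0 = {g. \<exists>A rhs a b. (A,rhs) \<in> P \<and> rhs = a@g@b} \<union> {[NT S0]}"

definition bp :: "('n \<times> ('n,'a) sym list) set \<Rightarrow> 'n \<Rightarrow> nat \<Rightarrow> nat \<Rightarrow> ('n,'a) sym list \<Rightarrow> 'a list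
   \<Rightarrow> nat \<Rightarrow> nat \<Rightarrow> ('n,'a) sym list \<Rightarrow> bool" where
  "bp P S0 j0 k al w i j g \<longleftrightarrow> g \<in> Sub P S0 \<and> j0 \<le> j \<and> j \<le> k \<and> i + j \<le> length w \<and>
    (\<exists>b1 b2. derives P al (b1@g@b2) \<and> derives P b1 (map Tm (take i w)) \<and>
       derives P g (map Tm (take j (drop i w))) \<and> derives P b2 (map Tm (drop (i+j) w)))"

lemma bp_step: "derives P a b \<Longrightarrow> bp P S0 j0 k b w i j g \<Longrightarrow> bp P S0 j0 k a w i j g"
  unfolding bp_def by (meson derives_trans)

lemma bp_left:
  assumes "bp P S0 j0 k u w1 i j g" "derives P v (map Tm w2)"
  shows "bp P S0 j0 k (u@v) (w1@w2) i j g"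
proof -
  obtain b1 b2 where b: "g \<in> Sub P S0" "j0 \<le> j" "j \<le> k" "i + j \<le> length w1"
    "derives P u (b1@g@b2)" "derives P b1 (map Tm (take i w1))"
    "derives P g (map Tm (take j (drop i w1)))" "derives P b2 (map Tm (drop (i+j) w1))"
    using assms(1) unfolding bp_def by blast
  have "derives P (u@v) (b1@g@(b2@v))" using derives_append[OF b(5) derives_refl] by simp
  moreover have "derives P (b2@v) (map Tm (drop (i+j) (w1@w2)))"
    using derives_append[OF b(8) assms(2)] b(4) by simp
  moreover have "take i (w1@w2) = take i w1" "take j (drop i (w1@w2)) = take j (drop i w1)"
    using b(4) by auto
  moreover have "i + j \<le> length (w1@w2)" using b(4) by simp
  ultimately show ?thesis using b unfolding bp_def by fastforce
qed

lemma bp_right: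
  assumes "derives P u (map Tm w1)" "bp P S0 j0 k v w2 i j g"
  shows "bp P S0 j0 k (u@v) (w1@w2) (length w1 + i) j g"
proof -
  obtain b1 b2 where b: "g \<in> Sub P S0" "j0 \<le> j" "j \<le> k" "i + j \<le> length w2"
    "derives P v (b1@g@b2)" "derives P b1 (map Tm (take i w2))"
    "derives P g (map Tm (take j (drop i w2)))" "derives P b2 (map Tm (drop (i+j) w2))"
    using assms(2) unfolding bp_def by blast
  have "derives P (u@v) ((u@b1)@g@b2)" using derives_append[OF derives_refl b(5)] by simp
  moreover have "derives P (u@b1) (map Tm (take (length w1 + i) (w1@w2)))"
    using derives_append[OF assms(1) b(6)] by simp
  moreover have "drop (length w1 + i) (w1@w2) = drop i w2" "drop (length w1 + i + j) (w1@w2) = drop (i+j) w2"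
    by auto
  ultimately show ?thesis using b unfolding bp_def
    by (smt (verit) add.assoc length_append trans_le_add2 add_le_cancel_left)
qed

lemma Sub_split:
  assumes "s # t # rest \<in> Sub P S0"
  shows "[s] \<in> Sub P S0" "t # rest \<in> Sub P S0"
proof -
  obtain A rhs a b where h: "(A,rhs) \<in> P" "rhs = a @ (s#t#rest) @ b"
    using assms unfolding Sub_def by auto
  have "rhs = a @ [s] @ ((t#rest)@b)" "rhs = (a@[s]) @ (t#rest) @ b" using h by auto
  then show "[s] \<in> Sub P S0" "t # rest \<in> Sub P S0" using h(1) unfolding Sub_def by blast+
qed

lemma Sub_rhs: "(A,rhs) \<in> P \<Longrightarrow> rhs \<in> Sub P S0"
proof -
  assume "(A,rhs) \<in> P"
  moreover have "rhs = [] @ rhs @ []" by simp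
  ultimately show ?thesis unfolding Sub_def by blast
qed

lemma claim:
  fixes P :: "('n \<times> ('n,'a) sym list) set" and j0 k N :: nat
  assumes k: "2*j0 \<le> k" "1 \<le> j0"
  shows "\<forall>al w. (derive1 P ^^ N) al (map Tm w) \<longrightarrow> al \<in> Sub P S0 \<longrightarrow> j0 \<le> length w
     \<longrightarrow> (\<exists>i j g. bp P S0 j0 k al w i j g)"
proof (induction N rule: less_induct)
  case (less N)
  have "\<forall>N'\<le>N. \<forall>w. (derive1 P ^^ N') al (map Tm w) \<longrightarrow> al \<in> Sub P S0 \<longrightarrow> j0 \<le> length w
     \<longrightarrow> (\<exists>i j g. bp P S0 j0 k al w i j g)" for al
  proof (induction "length al" arbitrary: al rule: less_induct)
    case less2: less
    show ?case
    proof (intro allI impI)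
      fix N' w
      assume N': "N' \<le> N" and d: "(derive1 P ^^ N') al (map Tm w)" and al: "al \<in> Sub P S0"
        and lw: "j0 \<le> length w"
      show "\<exists>i j g. bp P S0 j0 k al w i j g"
      proof (cases "length w \<le> k")
        case True
        have "derives P al (map Tm w)" using d relpowp_imp_rtranclp unfolding derives_def by metis
        then have "bp P S0 j0 k al w 0 (length w) al"
          unfolding bp_def using True lw al
          by (auto intro!: exI[of _ "[]"] simp: derives_refl)
        then show ?thesis by blast
      next
        case False
        show ?thesis
        proof (cases al)
          case Nil
          then have "(derive1 P ^^ N') (map Tm []) (map Tm w)" using d by simp
          then have "map Tm w = []" using relpow_tm by fastforce
          then show ?thesis using False k by simp
        next
          case (Cons s rest)
          show ?thesis
          proof (cases rest)
            case Nil
            show ?thesis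
            proof (cases s)
              case (Tm a)
              then have "(derive1 P ^^ N') (map Tm [a]) (map Tm w)" using d Cons Nil by simp
              then have "map Tm w = [Tm a]" using relpow_tm by fastforce
              then show ?thesis using False k by auto
            next
              case (NT A)
              show ?thesis
              proof (cases N')
                case 0
                then have "[NT A] = map Tm w" using d Cons Nil NT by simp
                then show ?thesis by (cases w) auto
              next
                case (Suc M)
                then obtain rhs where r: "derive1 P [NT A] rhs" "(derive1 P ^^ M) rhs (map Tm w)"
                  using d Cons Nil NT relpowp_Suc_D2 by metis
                have "(A, rhs) \<in> P" using r(1) derive1_NT by metis
                then have "rhs \<in> Sub P S0" by (rule Sub_rhs)
                moreover have "M < N" using Suc N' by simp
                ultimately obtain i j g where "bp P S0 j0 k rhs w i j g"
                  using less.IH r(2) lw by blast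
                moreover have "derives P al rhs" using r(1) Cons Nil NT unfolding derives_def by auto
                ultimately have "bp P S0 j0 k al w i j g" using bp_step by metis
                then show ?thesis by blast
              qed
            qed
          next
            case (Cons t rest')
            have al2: "al = [s] @ (t#rest')" using Cons \<open>al = s # rest\<close> by simp
            have subs: "[s] \<in> Sub P S0" "t # rest' \<in> Sub P S0"
            proof -
              have "s # t # rest' \<in> Sub P S0" using al al2 by simp
              then show "[s] \<in> Sub P S0" "t # rest' \<in> Sub P S0" by (rule Sub_split)+
            qed
            obtain N1 N2 v1 v2 where sp: "map Tm w = v1 @ v2" "N1 + N2 = N'"
              "(derive1 P ^^ N1) [s] v1" "(derive1 P ^^ N2) (t#rest') v2"
              using relpow_split[OF d[unfolded al2]] by metis
            obtain w1 w2 where ww: "w = w1 @ w2" "v1 = map Tm w1" "v2 = map Tm w2"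
              using sp(1) by (auto simp: map_eq_append_conv)
            have len1: "length [s] < length al" "length (t#rest') < length al" using al2 by auto
            have N12: "N1 \<le> N" "N2 \<le> N" using sp(2) N' by auto
            show ?thesis
            proof (cases "j0 \<le> length w1")
              case True
              then obtain i j g where "bp P S0 j0 k [s] w1 i j g"
                using less2[OF len1(1)] N12 sp(3) ww subs by blast
              moreover have "derives P (t#rest') (map Tm w2)"
                using sp(4) ww relpowp_imp_rtranclp unfolding derives_def by metis
              ultimately show ?thesis using bp_left al2 ww(1) by metis
            next
              case F2: False
              then have "j0 \<le> length w2" using False ww k by auto
              then obtain i j g where "bp P S0 j0 k (t#rest') w2 i j g"
                using less2[OF len1(2)] N12 sp(4) ww subs by blast
              moreover have "derives P [s] (map Tm w1)"
                using sp(3) ww relpowp_imp_rtranclp unfolding derives_def by metis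
              ultimately show ?thesis using bp_right al2 ww(1) by metis
            qed
          qed
        qed
      qed
    qed
  qed
  then show ?case by blast
qed

lemma Sub_finite:
  assumes "finite P"
  shows "finite (Sub P S0)"
proof -
  have "{g. \<exists>A rhs a b. (A,rhs) \<in> P \<and> rhs = a@g@b} \<subseteq>
     (\<Union>(A,rhs)\<in>P. (\<lambda>(d,l). take l (drop d rhs)) ` ({..length rhs} \<times> {..length rhs}))"
  proof
    fix g assume "g \<in> {g. \<exists>A rhs a b. (A,rhs) \<in> P \<and> rhs = a@g@b}"
    then obtain A rhs a b where h: "(A,rhs) \<in> P" "rhs = a@g@b" by blast
    then have "g = (\<lambda>(d,l). take l (drop d rhs)) (length a, length g)" by simp
    moreover have "(length a, length g) \<in> {..length rhs} \<times> {..length rhs}" using h by auto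
    ultimately show "g \<in> (\<Union>(A,rhs)\<in>P. (\<lambda>(d,l). take l (drop d rhs)) ` ({..length rhs} \<times> {..length rhs}))"
      using h(1) by blast
  qed
  moreover have "finite (\<Union>(A,rhs)\<in>P. (\<lambda>(d,l). take l (drop d rhs)) ` ({..length rhs} \<times> {..length rhs}))"
    using assms by auto
  ultimately show ?thesis unfolding Sub_def by (meson finite_subset finite_UnI finite.intros)
qed

lemma exch:
  assumes "bp P S0 j0 k [NT S0] x i j g" "bp P S0 j0 k [NT S0] y i j g"
  shows "take i x @ take j (drop i y) @ drop (i+j) x \<in> Lang P S0"
proof -
  obtain b1 b2 where b: "derives P [NT S0] (b1@g@b2)" "derives P b1 (map Tm (take i x))"
    "derives P b2 (map Tm (drop (i+j) x))"
    using assms(1) unfolding bp_def by blast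
  have "derives P g (map Tm (take j (drop i y)))" using assms(2) unfolding bp_def by blast
  then have "derives P (b1@g@b2) (map Tm (take i x) @ map Tm (take j (drop i y)) @ map Tm (drop (i+j) x))"
    using b derives_append by metis
  then show ?thesis using b(1) derives_trans unfolding Lang_def by fastforce
qed

lemma window:
  assumes "length x = n" "length y = n" "p \<le> q" "q \<le> n"
  shows "take p x @ take (q-p) (drop p y) @ drop q x = map (\<lambda>t. if p \<le> t \<and> t < q then y!t else x!t) [0..<n]"
  using assms by (intro nth_equalityI) (auto simp: nth_append min_def)


theorem lemma4p1:
  fixes L :: "'a list set" and Sigma :: "'a set"
  assumes "finite Sigma" and "card Sigma \<ge> 2"
    and "L \<subseteq> lists Sigma" and "context_free L" and "infinite L"
  shows "\<exists>m::nat. m > 0 \<and>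
    (\<forall>n::nat. \<forall>S j0 k.
       n \<ge> 2 \<longrightarrow> S \<subseteq> L \<inter> {x. x \<in> lists Sigma \<and> length x = n} \<longrightarrow>
       j0 \<in> {2..n} \<longrightarrow> k \<in> {2..n} \<longrightarrow> k \<ge> 2 * j0 \<longrightarrow>
       (\<forall>i \<in> {1..n - j0}. \<forall>u. u \<in> lists Sigma \<and> length u = j0 \<longrightarrow>
          real (card (Sslice S i u))
            < real (card S) / (real m * real (k - j0 + 1) * real (n - j0 + 1))) \<longrightarrow>
       (\<exists>i j x1 x2 x3 y1 y2 y3.
          i \<in> {1..n} \<and> j \<in> {j0..k} \<and> i + j \<le> n \<and>
          x1 @ x2 @ x3 \<in> S \<and> y1 @ y2 @ y3 \<in> S \<and>
          length x1 = i \<and> length y1 = i \<and> length x2 = j \<and> length y2 = j \<and>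
          length x3 = length y3 \<and>
          x2 \<noteq> y2 \<and> x1 @ y2 @ x3 \<in> L \<and> y1 @ x2 @ y3 \<in> L))"
proof -
  obtain P :: "(nat \<times> (nat, 'a) sym list) set" and S0 where fP: "finite P" and LP: "L = Lang P S0"
    using assms(4) unfolding context_free_def by blast
  define G where "G = Sub P S0"
  have fG: "finite G" using Sub_finite[OF fP] G_def by simp
  have S0G: "[NT S0] \<in> G" unfolding G_def Sub_def by (rule UnI2) simp
  have "G \<noteq> {}" using S0G by blast
  then have G1: "card G \<ge> 1" using fG by (simp add: Suc_le_eq card_gt_0_iff)
  define m where "m = card G * card Sigma ^ 2"
  have m0: "m > 0" using G1 assms(2) unfolding m_def by simp
  show ?thesis
  proof (rule exI[of _ m], rule conjI[OF m0], intro allI impI)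
    fix n :: nat and S j0 k
    assume n2: "2 \<le> n" and SL: "S \<subseteq> L \<inter> {x. x \<in> lists Sigma \<and> length x = n}"
      and j0: "j0 \<in> {2..n}" and kk: "k \<in> {2..n}" and kj: "2 * j0 \<le> k"
      and H: "\<forall>i \<in> {1..n - j0}. \<forall>u. u \<in> lists Sigma \<and> length u = j0 \<longrightarrow>
          real (card (Sslice S i u))
            < real (card S) / (real m * real (k - j0 + 1) * real (n - j0 + 1))"
    define D where "D = real m * real (k - j0 + 1) * real (n - j0 + 1)"
    have jn: "2 \<le> j0" "j0 + 1 \<le> n" "k \<le> n" "j0 < n" "j0 \<le> k" using j0 kk kj by auto
    have Sx: "\<And>x. x \<in> S \<Longrightarrow> x \<in> Lang P S0 \<and> set x \<subseteq> Sigma \<and> length x = n"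
      using SL LP by auto
    have ex: "\<forall>x\<in>S. \<exists>t. bp P S0 j0 k [NT S0] x (fst t) (fst (snd t)) (snd (snd t))"
    proof
      fix x assume "x \<in> S"
      then have "x \<in> Lang P S0" "length x = n" using Sx by auto
      then obtain N where "(derive1 P ^^ N) [NT S0] (map Tm x)"
        unfolding Lang_def derives_def using rtranclp_imp_relpowp by fastforce
      moreover have "[NT S0] \<in> Sub P S0" using S0G G_def by simp
      moreover have "\<forall>al w. (derive1 P ^^ N) al (map Tm w) \<longrightarrow> al \<in> Sub P S0 \<longrightarrow> j0 \<le> length w
         \<longrightarrow> (\<exists>i j g. bp P S0 j0 k al w i j g)"
        by (rule claim) (use jn kj in auto)
      ultimately obtain i j g where "bp P S0 j0 k [NT S0] x i j g"
        using jn \<open>length x = n\<close> by (meson less_imp_le)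
      then show "\<exists>t. bp P S0 j0 k [NT S0] x (fst t) (fst (snd t)) (snd (snd t))"
        by (intro exI[of _ "(i,j,g)"]) simp
    qed
    then obtain gg where gg: "\<forall>x\<in>S. bp P S0 j0 k [NT S0] x (fst (gg x)) (fst (snd (gg x))) (snd (snd (gg x)))"
      by metis
    define I where "I x = fst (gg x)" for x
    define J where "J x = fst (snd (gg x))" for x
    define Ga where "Ga x = snd (snd (gg x))" for x
    define f where "f x = (gg x, x!0, x!j0)" for x
    define pp where "pp x = (if 1 \<le> I x then I x else 1)" for x
    define qq where "qq x = (if 1 \<le> I x then I x + J x else if j0 < J x then J x else j0 + 1)" for x
    have bpx: "bp P S0 j0 k [NT S0] x (I x) (J x) (Ga x)" if "x \<in> S" for x
      using gg that unfolding I_def J_def Ga_def by blast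
    have props: "Ga x \<in> G" "j0 \<le> J x" "J x \<le> k" "I x + J x \<le> n" if "x \<in> S" for x
      using bpx[OF that] Sx[OF that] unfolding bp_def G_def by auto
    have pqc: "1 \<le> pp x \<and> pp x + j0 \<le> qq x \<and> qq x \<le> n \<and> qq x - pp x \<le> k \<and> pp x \<le> n - j0"
      if "x \<in> S" for x
    proof -
      note h = props[OF that]
      consider "1 \<le> I x" | "\<not> 1 \<le> I x" "j0 < J x" | "\<not> 1 \<le> I x" "\<not> j0 < J x" by blast
      then show ?thesis
      proof cases
        case 1
        then have "pp x = I x" "qq x = I x + J x" unfolding pp_def qq_def by auto
        then show ?thesis using h jn 1 by linarith
      next
        case 2
        then have "pp x = 1" "qq x = J x" unfolding pp_def qq_def by auto
        then show ?thesis using h jn 2 by linarith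
      next
        case 3
        then have "pp x = 1" "qq x = j0 + 1" unfolding pp_def qq_def by auto
        then show ?thesis using h jn 3 by linarith
      qed
    qed
    have pq: "1 \<le> pp x" "pp x + j0 \<le> qq x" "qq x \<le> n" "qq x - pp x \<le> k" "pp x \<le> n - j0"
      if "x \<in> S" for x
      using pqc[OF that] by auto
    have agree: "\<forall>t<n. (I x \<le> t \<and> t < I x + J x) \<noteq> (pp x \<le> t \<and> t < qq x) \<longrightarrow> x!t = y!t"
      if "x \<in> S" "y \<in> S" "f x = f y" for x y
    proof (intro allI impI)
      fix t assume t: "t < n" "(I x \<le> t \<and> t < I x + J x) \<noteq> (pp x \<le> t \<and> t < qq x)"
      have e: "x!0 = y!0" "x!j0 = y!j0" using that(3) unfolding f_def by auto
      have "t = 0 \<or> t = j0"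
      proof -
        note h = props[OF that(1)]
        consider "1 \<le> I x" | "\<not> 1 \<le> I x" "j0 < J x" | "\<not> 1 \<le> I x" "\<not> j0 < J x" by blast
        then show ?thesis
        proof cases
          case 1
          then have "pp x = I x" "qq x = I x + J x" unfolding pp_def qq_def by auto
          then show ?thesis using t by simp
        next
          case 2
          then have "pp x = 1" "qq x = J x" "I x = 0" unfolding pp_def qq_def by auto
          then show ?thesis using t by auto
        next
          case 3
          then have "pp x = 1" "qq x = j0 + 1" "I x = 0" "J x = j0" using h unfolding pp_def qq_def by auto
          then show ?thesis using t by auto
        qed
      qed
      then show "x!t = y!t" using e by auto
    qed
    have finS: "finite S"
    proof -
      have "S \<subseteq> {x. set x \<subseteq> Sigma \<and> length x = n}" using Sx by auto
      then show ?thesis using finite_lists_length_eq[OF assms(1)] finite_subset by blast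
    qed
    have key: "\<exists>x\<in>S. \<exists>y\<in>S. f x = f y \<and> midd (pp x) (pp x + j0) x \<noteq> midd (pp x) (pp x + j0) y"
    proof (rule ccontr)
      assume nc: "\<not> ?thesis"
      define Cls where "Cls = f ` S"
      define grp where "grp c = {x\<in>S. f x = c}" for c
      have bound: "real (card (grp c)) < real (card S) / D" if cin: "c \<in> Cls" for c
      proof -
        obtain x0 where x0: "x0 \<in> S" "c = f x0" using cin unfolding Cls_def by blast
        define u where "u = midd (pp x0) (pp x0 + j0) x0"
        have lu: "length u = j0" using pq[OF x0(1)] Sx[OF x0(1)] unfolding u_def midd_def by auto
        have uS: "u \<in> lists Sigma" using Sx[OF x0(1)] unfolding u_def midd_def
          by (auto dest: in_set_takeD in_set_dropD)
        have "grp c \<subseteq> Sslice S (pp x0) u"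
        proof
          fix y assume "y \<in> grp c"
          then have y: "y \<in> S" "f y = f x0" using x0 unfolding grp_def by auto
          then have "pp y = pp x0" unfolding f_def pp_def I_def by auto
          moreover have "midd (pp x0) (pp x0 + j0) x0 = midd (pp x0) (pp x0 + j0) y"
            using nc x0(1) y by metis
          ultimately show "y \<in> Sslice S (pp x0) u" unfolding Sslice_def u_def using y(1) lu
            by (simp add: u_def)
        qed
        then have "card (grp c) \<le> card (Sslice S (pp x0) u)"
          by (intro card_mono) (auto simp: Sslice_def finS)
        moreover have "real (card (Sslice S (pp x0) u)) < real (card S) / D"
          using H pq[OF x0(1)] uS lu unfolding D_def by auto
        ultimately show ?thesis by linarith
      qed
      obtain a where a: "a \<in> Sigma" using assms(2) by (metis card.empty ex_in_conv not_numeral_le_zero)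
      have Sne: "S \<noteq> {}"
      proof
        assume "S = {}"
        moreover have "replicate j0 a \<in> lists Sigma" using a by auto
        ultimately show False using H jn by auto
      qed
      have finC: "finite Cls" using finS unfolding Cls_def by simp
      have Cne: "Cls \<noteq> {}" using Sne unfolding Cls_def by simp
      have "Cls \<subseteq> ({0..n-j0} \<times> {j0..k} \<times> G) \<times> Sigma \<times> Sigma"
      proof
        fix c assume "c \<in> Cls"
        then obtain x where x: "x \<in> S" "c = f x" unfolding Cls_def by blast
        have "x!0 \<in> Sigma" "x!j0 \<in> Sigma" using Sx[OF x(1)] jn n2 nth_mem by (metis le_less_trans less_le_trans pos2 subsetD)+
        moreover have "gg x \<in> {0..n-j0} \<times> {j0..k} \<times> G" using props[OF x(1)] unfolding I_def J_def Ga_def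
          by (cases "gg x") auto
        ultimately show "c \<in> ({0..n-j0} \<times> {j0..k} \<times> G) \<times> Sigma \<times> Sigma" using x unfolding f_def by auto
      qed
      then have c1: "card Cls \<le> card (({0..n-j0} \<times> {j0..k} \<times> G) \<times> Sigma \<times> Sigma)"
        using fG assms(1) by (intro card_mono) auto
      have c2: "card (({0..n-j0} \<times> {j0..k} \<times> G) \<times> Sigma \<times> Sigma)
          = (card {0..n-j0} * (card {j0..k} * card G)) * (card Sigma * card Sigma)"
        by (simp only: card_cartesian_product)
      have c3: "card {0..n-j0} = n - j0 + 1" by simp
      have c4: "card {j0..k} = k - j0 + 1" using jn by simp
      have c5: "card Cls \<le> (n - j0 + 1) * ((k - j0 + 1) * card G) * (card Sigma * card Sigma)"
        using c1 unfolding c2 c3 c4 .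
      have c6: "real ((n - j0 + 1) * ((k - j0 + 1) * card G) * (card Sigma * card Sigma)) = D"
        unfolding D_def m_def by (simp only: of_nat_mult power2_eq_square mult_ac)
      have cC: "real (card Cls) \<le> D" using c5 c6 by (metis of_nat_le_iff)
      have Dpos: "D > 0" unfolding D_def using m0 by simp
      have "S = (\<Union>c\<in>Cls. grp c)" unfolding Cls_def grp_def by auto
      then have "card S \<le> (\<Sum>c\<in>Cls. card (grp c))" using card_UN_le[OF finC] by metis
      then have "real (card S) \<le> (\<Sum>c\<in>Cls. real (card (grp c)))" by (metis of_nat_le_iff of_nat_sum)
      also have "\<dots> < (\<Sum>c\<in>Cls. real (card S) / D)"
        using bound finC Cne by (intro sum_strict_mono) auto
      also have "\<dots> = real (card Cls) * (real (card S) / D)" by simp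
      also have "\<dots> \<le> D * (real (card S) / D)" using cC by (intro mult_right_mono) auto
      also have "\<dots> = real (card S)" using Dpos by simp
      finally show False by simp
    qed
    then obtain x y where xy: "x \<in> S" "y \<in> S" "f x = f y"
      "midd (pp x) (pp x + j0) x \<noteq> midd (pp x) (pp x + j0) y" by blast
    have same: "I y = I x" "J y = J x" "Ga y = Ga x" using xy(3) unfolding f_def I_def J_def Ga_def by auto
    have lx: "length x = n" and ly: "length y = n" using Sx xy by auto
    define p where "p = pp x"
    define q where "q = qq x"
    have p: "1 \<le> p" "p + j0 \<le> q" "q \<le> n" "q - p \<le> k" using pq[OF xy(1)] unfolding p_def q_def by auto
    have ag: "\<forall>t<n. (I x \<le> t \<and> t < I x + J x) \<noteq> (p \<le> t \<and> t < q) \<longrightarrow> x!t = y!t"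
      using agree[OF xy(1,2,3)] unfolding p_def q_def .
    have w1: "take p x @ take (q-p) (drop p y) @ drop q x = take (I x) x @ take (J x) (drop (I x) y) @ drop (I x + J x) x"
    proof -
      have "take p x @ take (q-p) (drop p y) @ drop q x = map (\<lambda>t. if p \<le> t \<and> t < q then y!t else x!t) [0..<n]"
        using window[OF lx ly] p by simp
      also have "\<dots> = map (\<lambda>t. if I x \<le> t \<and> t < I x + J x then y!t else x!t) [0..<n]"
        using ag by (intro map_cong) auto
      also have "\<dots> = take (I x) x @ take (I x + J x - I x) (drop (I x) y) @ drop (I x + J x) x"
        using window[OF lx ly, of "I x" "I x + J x"] props[OF xy(1)] by simp
      finally show ?thesis by simp
    qed
    have w2: "take p y @ take (q-p) (drop p x) @ drop q y = take (I x) y @ take (J x) (drop (I x) x) @ drop (I x + J x) y"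
    proof -
      have "take p y @ take (q-p) (drop p x) @ drop q y = map (\<lambda>t. if p \<le> t \<and> t < q then x!t else y!t) [0..<n]"
        using window[OF ly lx] p by simp
      also have "\<dots> = map (\<lambda>t. if I x \<le> t \<and> t < I x + J x then x!t else y!t) [0..<n]"
        using ag by (intro map_cong) auto
      also have "\<dots> = take (I x) y @ take (I x + J x - I x) (drop (I x) x) @ drop (I x + J x) y"
        using window[OF ly lx, of "I x" "I x + J x"] props[OF xy(1)] by simp
      finally show ?thesis by simp
    qed
    have idx: "take p x @ take (q-p) (drop p x) @ drop q x = x"
      using window[OF lx lx, of p q] p lx map_nth[of x] by simp
    have idy: "take p y @ take (q-p) (drop p y) @ drop q y = y"
      using window[OF ly ly, of p q] p ly map_nth[of y] by simp
    have e1: "take (I x) x @ take (J x) (drop (I x) y) @ drop (I x + J x) x \<in> L"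
      using exch[OF bpx[OF xy(1)], of y] bpx[OF xy(2)] same LP by simp
    have e2: "take (I x) y @ take (J x) (drop (I x) x) @ drop (I x + J x) y \<in> L"
      using exch[OF bpx[OF xy(2)], of x] bpx[OF xy(1)] same LP by simp
    have ne: "take (q-p) (drop p x) \<noteq> take (q-p) (drop p y)"
    proof
      assume "take (q-p) (drop p x) = take (q-p) (drop p y)"
      then have "take j0 (take (q-p) (drop p x)) = take j0 (take (q-p) (drop p y))" by simp
      moreover have "j0 \<le> q - p" using p by simp
      ultimately have "take j0 (drop p x) = take j0 (drop p y)" by (simp add: min_def)
      then show False using xy(4) unfolding midd_def p_def by simp
    qed
    show "\<exists>i j x1 x2 x3 y1 y2 y3.
          i \<in> {1..n} \<and> j \<in> {j0..k} \<and> i + j \<le> n \<and>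
          x1 @ x2 @ x3 \<in> S \<and> y1 @ y2 @ y3 \<in> S \<and>
          length x1 = i \<and> length y1 = i \<and> length x2 = j \<and> length y2 = j \<and>
          length x3 = length y3 \<and>
          x2 \<noteq> y2 \<and> x1 @ y2 @ x3 \<in> L \<and> y1 @ x2 @ y3 \<in> L"
    proof (rule exI[of _ p], rule exI[of _ "q-p"], rule exI[of _ "take p x"],
        rule exI[of _ "take (q-p) (drop p x)"], rule exI[of _ "drop q x"],
        rule exI[of _ "take p y"], rule exI[of _ "take (q-p) (drop p y)"], rule exI[of _ "drop q y"],
        intro conjI)
      show "p \<in> {1..n}" using p by auto
      show "q - p \<in> {j0..k}" using p by auto
      show "p + (q - p) \<le> n" using p by auto
      show "take p x @ take (q-p) (drop p x) @ drop q x \<in> S" using idx xy(1) by simp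
      show "take p y @ take (q-p) (drop p y) @ drop q y \<in> S" using idy xy(2) by simp
      show "length (take p x) = p" "length (take p y) = p" using p lx ly by auto
      show "length (take (q-p) (drop p x)) = q - p" "length (take (q-p) (drop p y)) = q - p"
        using p lx ly by auto
      show "length (drop q x) = length (drop q y)" using lx ly by simp
      show "take (q-p) (drop p x) \<noteq> take (q-p) (drop p y)" by (rule ne)
      show "take p x @ take (q-p) (drop p y) @ drop q x \<in> L" using w1 e1 by simp
      show "take p y @ take (q-p) (drop p x) @ drop q y \<in> L" using w2 e2 by simp
    qed
  qed
qed

end
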